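(* Let $\rho_1(dx)=q_1(x)\,dx$ be a probability distribution on $\mathbb{R}_+$ whose density $q_1$ is continuous with compact support, and let $\rho_2$ be a probability distribution on $\mathbb{R}_+$ with $\rho_2\in\mathcal{S}_{loc}$. Then $\rho_1*\rho_2(dx)=\left(\int_{0-}^{x+}q_1(x-u)\,\rho_2(du)\right)dx$ and the density $x\mapsto\int_{0-}^{x+}q_1(x-u)\,\rho_2(du)$ belongs to $\mathcal{S}_d$.
   Context: For positive functions $f,g$ defined on some $[a,\infty)$, $f(x)\sim g(x)$ means $\lim_{x\to\infty}f(x)/g(x)=1$. A density function is a measurable $g:\mathbb{R}\to[0,\infty)$ with $\int g=1$. For integrable $f,g$, $f\otimes g(x):=\int f(x-u)g(u)\,du$; $\eta*\rho$ denotes convolution of measures. The class $\mathbf{L}$ consists of nonnegative measurable $g$ on $\mathbb{R}$ with $g(x)>0$ for all sufficiently large $x$ and $g(x+a)\sim g(x)$ for every $a\in\mathbb{R}$. $\mathcal{L}_d$ is the set of density functions in $\mathbf{L}$; $\mathcal{S}_d$ is the set of $g\in\mathcal{L}_d$ with $g\otimes g(x)\sim 2g(x)$. For $\Delta=(0,c]$, $c>0$: a distribution $\rho$ belongs to $\mathcal{L}_\Delta$ if $x\mapsto\rho((x,x+c])$ belongs to $\mathbf{L}$, and to $\mathcal{S}_\Delta$ if moreover $\rho*\rho((x,x+c])\sim 2\rho((x,x+c])$. $\mathcal{S}_{loc}$ is the class of distributions belonging to $\mathcal{S}_\Delta$ for every $\Delta=(0,c]$, $c>0$. *)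

theory Defs
  imports "HOL-Probability.Probability"
begin

definition asymp_eq :: "(real \<Rightarrow> real) \<Rightarrow> (real \<Rightarrow> real) \<Rightarrow> bool" where
  "asymp_eq f g \<longleftrightarrow> ((\<lambda>x. f x / g x) \<longlongrightarrow> 1) at_top"

definition density_function :: "(real \<Rightarrow> real) \<Rightarrow> bool" where
  "density_function g \<longleftrightarrow> g \<in> borel_measurable borel \<and> (\<forall>x. 0 \<le> g x) \<and>
     (\<integral>\<^sup>+ x. ennreal (g x) \<partial>lborel) = 1"

definition fconv :: "(real \<Rightarrow> real) \<Rightarrow> (real \<Rightarrow> real) \<Rightarrow> real \<Rightarrow> real" where
  "fconv f g x = (\<integral> u. f (x - u) * g u \<partial>lborel)"

definition class_L :: "(real \<Rightarrow> real) \<Rightarrow> bool" where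
  "class_L g \<longleftrightarrow> g \<in> borel_measurable borel \<and> (\<forall>x. 0 \<le> g x) \<and>
     (\<forall>\<^sub>F x in at_top. 0 < g x) \<and> (\<forall>a. asymp_eq (\<lambda>x. g (x + a)) g)"

definition class_L_d :: "(real \<Rightarrow> real) \<Rightarrow> bool" where
  "class_L_d g \<longleftrightarrow> density_function g \<and> class_L g"

definition class_S_d :: "(real \<Rightarrow> real) \<Rightarrow> bool" where
  "class_S_d g \<longleftrightarrow> class_L_d g \<and> asymp_eq (fconv g g) (\<lambda>x. 2 * g x)"

definition class_L_Delta :: "real \<Rightarrow> real measure \<Rightarrow> bool" where
  "class_L_Delta c \<rho> \<longleftrightarrow> class_L (\<lambda>x. measure \<rho> {x<..x + c})"

definition class_S_Delta :: "real \<Rightarrow> real measure \<Rightarrow> bool" where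
  "class_S_Delta c \<rho> \<longleftrightarrow> class_L_Delta c \<rho> \<and>
     asymp_eq (\<lambda>x. measure (\<rho> \<star> \<rho>) {x<..x + c}) (\<lambda>x. 2 * measure \<rho> {x<..x + c})"

definition class_S_loc :: "real measure \<Rightarrow> bool" where
  "class_S_loc \<rho> \<longleftrightarrow> (\<forall>c>0. class_S_Delta c \<rho>)"

definition distr_Rplus :: "real measure \<Rightarrow> bool" where
  "distr_Rplus \<rho> \<longleftrightarrow> prob_space \<rho> \<and> sets \<rho> = sets borel \<and> emeasure \<rho> {..<0} = 0"

end

theory Submission
  imports Defs
begin


definition Gf :: "(real \<Rightarrow> real) \<Rightarrow> real measure \<Rightarrow> real \<Rightarrow> real" where
  "Gf r \<sigma> x = (\<integral>u. r (x - u) \<partial>\<sigma>)"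

lemma cc_bounded:
  fixes r :: "real \<Rightarrow> real"
  assumes "continuous_on UNIV r" "\<forall>v. \<bar>v\<bar> > B \<longrightarrow> r v = 0"
  shows "\<exists>M\<ge>0. \<forall>v. \<bar>r v\<bar> \<le> M"
proof -
  have "compact (r ` cball 0 B)"
    by (rule compact_continuous_image) (auto intro: continuous_on_subset[OF assms(1)])
  then obtain M where M: "\<forall>y\<in>r ` cball 0 B. norm y \<le> M"
    using compact_imp_bounded bounded_iff by metis
  show ?thesis
  proof (intro exI[of _ "max M 0"] conjI allI)
    fix v
    show "\<bar>r v\<bar> \<le> max M 0"
    proof (cases "\<bar>v\<bar> > B")
      case True then show ?thesis using assms(2) by simp
    next
      case False then have "v \<in> cball 0 B" by (simp add: dist_real_def)
      then have "norm (r v) \<le> M" using M by blast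
      then show ?thesis by simp
    qed
  qed simp
qed

lemma cc_unif:
  fixes r :: "real \<Rightarrow> real"
  assumes "continuous_on UNIV r" "\<forall>v. \<bar>v\<bar> > B \<longrightarrow> r v = 0" "e > 0"
  shows "\<exists>d>0. \<forall>v w. \<bar>v - w\<bar> < d \<longrightarrow> \<bar>r v - r w\<bar> < e"
proof -
  have "uniformly_continuous_on (cball 0 (B+1)) r"
    by (rule compact_uniformly_continuous) (auto intro: continuous_on_subset[OF assms(1)])
  then obtain d where d: "d > 0" "\<forall>x\<in>cball 0 (B+1). \<forall>x'\<in>cball 0 (B+1). dist x' x < d \<longrightarrow> dist (r x') (r x) < e"
    unfolding uniformly_continuous_on_def using assms(3) by metis
  show ?thesis
  proof (intro exI[of _ "min d 1"] conjI allI impI)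
    fix v w :: real assume vw: "\<bar>v - w\<bar> < min d 1"
    show "\<bar>r v - r w\<bar> < e"
    proof (cases "\<bar>v\<bar> \<le> B + 1 \<and> \<bar>w\<bar> \<le> B + 1")
      case True
      then show ?thesis using d vw by (auto simp: dist_real_def)
    next
      case False
      then have "\<bar>v\<bar> > B \<and> \<bar>w\<bar> > B" using vw by auto
      then show ?thesis using assms(2,3) by simp
    qed
  qed (use d in auto)
qed

lemma Gf_measurable:
  fixes r :: "real \<Rightarrow> real"
  assumes [measurable]: "r \<in> borel_measurable borel" and "finite_measure \<sigma>" and sb: "sets \<sigma> = sets borel"
  shows "Gf r \<sigma> \<in> borel_measurable borel"
proof -
  interpret finite_measure \<sigma> by fact
  have [measurable_cong]: "sets \<sigma> = sets borel" by (rule sb)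
  show ?thesis unfolding Gf_def
    by (rule borel_measurable_lebesgue_integral) measurable
qed

lemma Gf_integrable:
  fixes r :: "real \<Rightarrow> real"
  assumes [measurable]: "r \<in> borel_measurable borel" and "finite_measure \<sigma>" and sb: "sets \<sigma> = sets borel"
    and M: "\<forall>v. \<bar>r v\<bar> \<le> M"
  shows "integrable \<sigma> (\<lambda>u. r (x - u))"
proof -
  interpret finite_measure \<sigma> by fact
  have [measurable_cong]: "sets \<sigma> = sets borel" by (rule sb)
  show ?thesis
    by (rule integrable_const_bound[where B=M]) (use M in auto)
qed

lemma Gf_nn:
  fixes r :: "real \<Rightarrow> real"
  assumes [measurable]: "r \<in> borel_measurable borel" and "finite_measure \<sigma>" and sb: "sets \<sigma> = sets borel"
    and M: "\<forall>v. \<bar>r v\<bar> \<le> M" and nn: "\<forall>v. 0 \<le> r v"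
  shows "ennreal (Gf r \<sigma> x) = (\<integral>\<^sup>+u. ennreal (r (x - u)) \<partial>\<sigma>)"
  unfolding Gf_def
  by (rule nn_integral_eq_integral[symmetric]) (use Gf_integrable[OF assms(1-4)] nn in auto)

lemma Gf_bound:
  fixes r :: "real \<Rightarrow> real"
  assumes [measurable]: "r \<in> borel_measurable borel" and "finite_measure \<sigma>" and sb: "sets \<sigma> = sets borel"
    and M: "\<forall>v. \<bar>r v\<bar> \<le> M" and nn: "\<forall>v. 0 \<le> r v"
  shows "0 \<le> Gf r \<sigma> x" "\<bar>Gf r \<sigma> x\<bar> \<le> M * measure \<sigma> (space \<sigma>)"
proof -
  interpret finite_measure \<sigma> by fact
  show "0 \<le> Gf r \<sigma> x" unfolding Gf_def using nn by (simp add: integral_nonneg)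
  have "\<bar>Gf r \<sigma> x\<bar> \<le> (\<integral>u. M \<partial>\<sigma>)" unfolding Gf_def
    using integral_abs_bound_integral[OF Gf_integrable[OF assms(1-4)], of "\<lambda>_. M"] M
    by auto
  then show "\<bar>Gf r \<sigma> x\<bar> \<le> M * measure \<sigma> (space \<sigma>)" by (simp add: mult.commute)
qed



lemma Gf_comp:
  fixes r :: "real \<Rightarrow> real"
  assumes rm[measurable]: "r \<in> borel_measurable borel" and M: "\<forall>v. \<bar>r v\<bar> \<le> M" and nn: "\<forall>v. 0 \<le> r v"
    and fs: "finite_measure \<sigma>" and ft: "finite_measure \<tau>"
    and ss: "sets \<sigma> = sets borel" and st: "sets \<tau> = sets borel"
  shows "Gf (Gf r \<tau>) \<sigma> x = Gf r (\<sigma> \<star> \<tau>) x"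
proof -
  have gm[measurable]: "Gf r \<tau> \<in> borel_measurable borel" by (rule Gf_measurable[OF rm ft st])
  have gb: "\<forall>v. \<bar>Gf r \<tau> v\<bar> \<le> M * measure \<tau> (space \<tau>)" using Gf_bound[OF rm ft st M nn] by blast
  have gn: "\<forall>v. 0 \<le> Gf r \<tau> v" using Gf_bound[OF rm ft st M nn] by blast
  have fc: "finite_measure (\<sigma> \<star> \<tau>)" by (rule convolution_finite[OF fs ft st ss])
  have "ennreal (Gf (Gf r \<tau>) \<sigma> x) = (\<integral>\<^sup>+u. ennreal (Gf r \<tau> (x - u)) \<partial>\<sigma>)"
    by (rule Gf_nn[OF gm fs ss gb gn])
  also have "\<dots> = (\<integral>\<^sup>+u. \<integral>\<^sup>+w. ennreal (r (x - (u + w))) \<partial>\<tau> \<partial>\<sigma>)"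
    by (simp add: Gf_nn[OF rm ft st M nn] diff_diff_eq)
  also have "\<dots> = (\<integral>\<^sup>+s. ennreal (r (x - s)) \<partial>(\<sigma> \<star> \<tau>))"
    by (rule nn_integral_convolution[symmetric]) (use fs ft ss st in auto)
  also have "\<dots> = ennreal (Gf r (\<sigma> \<star> \<tau>) x)"
    by (rule Gf_nn[OF rm fc _ M nn, symmetric]) simp
  finally show ?thesis
    using Gf_bound(1)[OF gm fs ss gb gn, of x] Gf_bound(1)[OF rm fc sets_convolution M nn, of x] by simp
qed

lemma conv_density_left:
  fixes r :: "real \<Rightarrow> real"
  assumes rm[measurable]: "r \<in> borel_measurable borel" and M: "\<forall>v. \<bar>r v\<bar> \<le> M" and nn: "\<forall>v. 0 \<le> r v"
    and fr: "finite_measure (density lborel (\<lambda>x. ennreal (r x)))"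
    and fs: "finite_measure \<sigma>" and ss: "sets \<sigma> = sets borel"
  shows "density lborel (\<lambda>x. ennreal (r x)) \<star> \<sigma> = density lborel (\<lambda>x. ennreal (Gf r \<sigma> x))"
proof (rule measure_eqI)
  interpret fs: finite_measure \<sigma> by fact
  interpret pair_sigma_finite lborel \<sigma> ..
  have [measurable_cong]: "sets \<sigma> = sets borel" by (rule ss)
  have gm[measurable]: "Gf r \<sigma> \<in> borel_measurable borel" by (rule Gf_measurable[OF rm fs ss])
  show "sets (density lborel (\<lambda>x. ennreal (r x)) \<star> \<sigma>) = sets (density lborel (\<lambda>x. ennreal (Gf r \<sigma> x)))"
    by simp
  fix A assume "A \<in> sets (density lborel (\<lambda>x. ennreal (r x)) \<star> \<sigma>)"
  then have A[measurable]: "A \<in> sets borel" by simp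
  have "emeasure (density lborel (\<lambda>x. ennreal (r x)) \<star> \<sigma>) A
      = (\<integral>\<^sup>+x. \<integral>\<^sup>+y. indicator A (x + y) \<partial>\<sigma> \<partial>density lborel (\<lambda>x. ennreal (r x)))"
    by (rule convolution_emeasure'[OF A fr fs ss]) simp
  also have "\<dots> = (\<integral>\<^sup>+x. ennreal (r x) * \<integral>\<^sup>+y. indicator A (x + y) \<partial>\<sigma> \<partial>lborel)"
    by (rule nn_integral_density) measurable
  also have "\<dots> = (\<integral>\<^sup>+x. \<integral>\<^sup>+y. ennreal (r x) * indicator A (x + y) \<partial>\<sigma> \<partial>lborel)"
    by (rule nn_integral_cong) (rule nn_integral_cmult[symmetric]; measurable)
  also have "\<dots> = (\<integral>\<^sup>+y. \<integral>\<^sup>+x. ennreal (r x) * indicator A (x + y) \<partial>lborel \<partial>\<sigma>)"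
    by (rule Fubini'[symmetric]) measurable
  also have "\<dots> = (\<integral>\<^sup>+y. \<integral>\<^sup>+z. ennreal (r (z - y)) * indicator A z \<partial>lborel \<partial>\<sigma>)"
  proof (rule nn_integral_cong)
    fix y
    show "(\<integral>\<^sup>+x. ennreal (r x) * indicator A (x + y) \<partial>lborel) = (\<integral>\<^sup>+z. ennreal (r (z - y)) * indicator A z \<partial>lborel)"
      using nn_integral_real_affine[of "\<lambda>z. ennreal (r (z - y)) * indicator A z" 1 y]
      by (simp add: add.commute)
  qed
  also have "\<dots> = (\<integral>\<^sup>+z. \<integral>\<^sup>+y. ennreal (r (z - y)) * indicator A z \<partial>\<sigma> \<partial>lborel)"
    by (rule Fubini') measurable
  also have "\<dots> = (\<integral>\<^sup>+z. ennreal (Gf r \<sigma> z) * indicator A z \<partial>lborel)"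
  proof (rule nn_integral_cong)
    fix z
    show "(\<integral>\<^sup>+y. ennreal (r (z - y)) * indicator A z \<partial>\<sigma>) = ennreal (Gf r \<sigma> z) * indicator A z"
      by (simp add: nn_integral_multc Gf_nn[OF rm fs ss M nn])
  qed
  also have "\<dots> = emeasure (density lborel (\<lambda>x. ennreal (Gf r \<sigma> x))) A"
    by (rule emeasure_density[symmetric]) auto
  finally show "emeasure (density lborel (\<lambda>x. ennreal (r x)) \<star> \<sigma>) A = emeasure (density lborel (\<lambda>x. ennreal (Gf r \<sigma> x))) A" .
qed



lemma cell_ind:
  fixes h B v :: real
  assumes "h > 0"
  shows "(v \<in> {-B + real i * h ..< -B + real i * h + h}) \<longleftrightarrow> \<lfloor>(v + B) / h\<rfloor> = int i"
proof -
  have "(v \<in> {-B + real i * h ..< -B + real i * h + h}) \<longleftrightarrow> real i \<le> (v + B) / h \<and> (v + B) / h < real i + 1"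
    using assms by (auto simp: pos_le_divide_eq pos_divide_less_eq algebra_simps)
  also have "\<dots> \<longleftrightarrow> \<lfloor>(v + B) / h\<rfloor> = int i"
    by (simp add: floor_eq_iff)
  finally show ?thesis .
qed

lemma cell_approx:
  fixes r :: "real \<Rightarrow> real" and h B e :: real and N :: nat
  assumes h: "h > 0" and supp: "\<forall>v. \<bar>v\<bar> > B \<longrightarrow> r v = 0"
    and uc: "\<forall>v w. \<bar>v - w\<bar> < h \<longrightarrow> \<bar>r v - r w\<bar> \<le> e"
    and NB: "-B + real N * h > B"
  shows "\<bar>r v - (\<Sum>i<N. r (-B + real i * h) * indicator {-B + real i * h ..< -B + real i * h + h} v)\<bar>
      \<le> e * (\<Sum>i<N. indicator {-B + real i * h ..< -B + real i * h + h} v)"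
proof -
  define m where "m = \<lfloor>(v + B) / h\<rfloor>"
  have ind: "\<And>i. indicator {-B + real i * h ..< -B + real i * h + h} v = (if int i = m then 1 else (0::real))"
    using cell_ind[OF h] unfolding m_def by (simp add: indicator_def)
  show ?thesis
  proof (cases "m < 0")
    case True
    then have "(v + B) / h < 0" unfolding m_def by linarith
    then have "v < -B" using h by (simp add: divide_less_0_iff)
    then have "\<bar>v\<bar> > B" by linarith
    then have "r v = 0" using supp by blast
    moreover have "\<And>i. int i \<noteq> m" using True by auto
    ultimately show ?thesis by (simp only: ind) simp
  next
    case False
    define k where "k = nat m"
    have ik: "\<And>i. (int i = m) = (i = k)" using False unfolding k_def by auto
    have s1: "(\<Sum>i<N. r (-B + real i * h) * indicator {-B + real i * h ..< -B + real i * h + h} v)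
        = (if k < N then r (-B + real k * h) else 0)"
      by (simp only: ind ik) (simp add: if_distrib cong: if_cong)
    have s2: "(\<Sum>i<N. indicator {-B + real i * h ..< -B + real i * h + h} v) = (if k < N then 1 else (0::real))"
      by (simp only: ind ik) simp
    show ?thesis
    proof (cases "k < N")
      case True
      have "v \<in> {-B + real k * h ..< -B + real k * h + h}"
        using cell_ind[OF h, of v B k] False unfolding m_def k_def by simp
      then have "\<bar>v - (-B + real k * h)\<bar> < h" by auto
      then show ?thesis unfolding s1 s2 using uc True by simp
    next
      case nk: False
      have "real k \<le> (v + B) / h" using False unfolding k_def m_def by linarith
      then have "real k * h \<le> v + B" using h by (simp add: pos_le_divide_eq)
      moreover have "real N * h \<le> real k * h" using nk h by simp
      ultimately have "v > B" using NB by linarith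
      then have "r v = 0" using supp by auto
      then show ?thesis unfolding s1 s2 using nk by simp
    qed
  qed
qed



lemma riemann:
  fixes r :: "real \<Rightarrow> real" and h B e :: real and N :: nat
  assumes h: "h > 0" and ri: "integrable lborel r" and int1: "integral\<^sup>L lborel r = 1"
    and pw: "\<forall>v. \<bar>r v - (\<Sum>i<N. r (-B + real i * h) * indicator {-B + real i * h ..< -B + real i * h + h} v)\<bar>
      \<le> e * (\<Sum>i<N. indicator {-B + real i * h ..< -B + real i * h + h} v)"
  shows "\<bar>1 - h * (\<Sum>i<N. r (-B + real i * h))\<bar> \<le> e * real N * h"
proof -
  define J where "J i = {-B + real i * h ..< -B + real i * h + h}" for i :: nat
  have iJ: "integrable lborel (indicator (J i) :: real \<Rightarrow> real)" for i
    using h unfolding J_def by (intro integrable_real_indicator) auto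
  have mJ: "measure lborel (J i) = h" for i using h unfolding J_def by simp
  define F where "F v = (\<Sum>i<N. r (-B + real i * h) * indicator (J i) v)" for v
  define E where "E v = (\<Sum>i<N. indicator (J i) v :: real)" for v
  have iF: "integrable lborel F" unfolding F_def by (rule Bochner_Integration.integrable_sum, rule integrable_mult_right, rule iJ)
  have iE: "integrable lborel E" unfolding E_def using iJ by auto
  have IF: "integral\<^sup>L lborel F = (\<Sum>i<N. r (-B + real i * h)) * h"
    unfolding F_def
    by (subst Bochner_Integration.integral_sum) (use iJ mJ in \<open>auto simp: sum_distrib_right\<close>)
  have IE: "integral\<^sup>L lborel E = real N * h"
    unfolding E_def
    by (subst Bochner_Integration.integral_sum) (use iJ mJ in auto)
  have pw': "\<bar>r v - F v\<bar> \<le> e * E v" for v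
    using pw[rule_format, of v] unfolding F_def E_def J_def .
  have "\<bar>1 - h * (\<Sum>i<N. r (-B + real i * h))\<bar> = \<bar>\<integral>v. r v - F v \<partial>lborel\<bar>"
    using int1 IF ri iF by (simp add: mult.commute)
  also have "\<dots> \<le> (\<integral>v. e * E v \<partial>lborel)"
    by (rule integral_abs_bound_integral) (use ri iF iE pw' in auto)
  also have "\<dots> = e * real N * h" using IE by simp
  finally show ?thesis .
qed

lemma Gstep:
  fixes r :: "real \<Rightarrow> real" and h B e :: real and N :: nat and \<sigma> :: "real measure"
  assumes fs: "finite_measure \<sigma>" and ss: "sets \<sigma> = sets borel"
    and rm[measurable]: "r \<in> borel_measurable borel" and M: "\<forall>v. \<bar>r v\<bar> \<le> M"
    and pw: "\<forall>v. \<bar>r v - (\<Sum>i<N. r (-B + real i * h) * indicator {-B + real i * h ..< -B + real i * h + h} v)\<bar>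
      \<le> e * (\<Sum>i<N. indicator {-B + real i * h ..< -B + real i * h + h} v)"
  shows "\<bar>Gf r \<sigma> x - (\<Sum>i<N. r (-B + real i * h) * measure \<sigma> {x + (B - real i * h - h) <.. x + (B - real i * h - h) + h})\<bar>
     \<le> e * (\<Sum>i<N. measure \<sigma> {x + (B - real i * h - h) <.. x + (B - real i * h - h) + h})"
proof -
  interpret finite_measure \<sigma> by fact
  have [measurable_cong]: "sets \<sigma> = sets borel" by (rule ss)
  define I where "I i = {x + (B - real i * h - h) <.. x + (B - real i * h - h) + h}" for i :: nat
  have indeq: "indicator {-B + real i * h ..< -B + real i * h + h} (x - u) = (indicator (I i) u :: real)" for i u
    unfolding I_def by (auto simp: indicator_def algebra_simps)
  have iI: "integrable \<sigma> (indicator (I i) :: real \<Rightarrow> real)" for i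
    unfolding I_def by (intro integrable_real_indicator) (auto simp: ss less_top[symmetric] emeasure_finite)
  have sp: "space \<sigma> = UNIV" using sets_eq_imp_space_eq[OF ss] by simp
  define F where "F u = (\<Sum>i<N. r (-B + real i * h) * indicator (I i) u)" for u
  define E where "E u = (\<Sum>i<N. indicator (I i) u :: real)" for u
  have iF: "integrable \<sigma> F" unfolding F_def by (rule Bochner_Integration.integrable_sum, rule integrable_mult_right, rule iI)
  have iE: "integrable \<sigma> E" unfolding E_def using iI by auto
  have ir: "integrable \<sigma> (\<lambda>u. r (x - u))" by (rule Gf_integrable[OF rm fs ss M])
  have IF: "integral\<^sup>L \<sigma> F = (\<Sum>i<N. r (-B + real i * h) * measure \<sigma> (I i))"
    unfolding F_def
    by (subst Bochner_Integration.integral_sum) (use iI sp in auto)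
  have IE: "integral\<^sup>L \<sigma> E = (\<Sum>i<N. measure \<sigma> (I i))"
    unfolding E_def
    by (subst Bochner_Integration.integral_sum) (use iI sp in auto)
  have pw': "\<bar>r (x - u) - F u\<bar> \<le> e * E u" for u
    using pw[rule_format, of "x - u"] unfolding F_def E_def indeq .
  have "\<bar>Gf r \<sigma> x - (\<Sum>i<N. r (-B + real i * h) * measure \<sigma> (I i))\<bar> = \<bar>\<integral>u. r (x - u) - F u \<partial>\<sigma>\<bar>"
    using IF ir iF by (simp add: Gf_def)
  also have "\<dots> \<le> (\<integral>u. e * E u \<partial>\<sigma>)"
    by (rule integral_abs_bound_integral) (use ir iF iE pw' in auto)
  also have "\<dots> = e * (\<Sum>i<N. measure \<sigma> (I i))" using IE by simp
  finally show ?thesis unfolding I_def .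
qed



lemma key:
  fixes r :: "real \<Rightarrow> real" and \<sigma> :: "real measure" and B \<epsilon> :: real
  assumes fs: "finite_measure \<sigma>" and ss: "sets \<sigma> = sets borel"
    and pos: "\<forall>c>0. \<forall>\<^sub>F x in at_top. 0 < measure \<sigma> {x<..x + c}"
    and shift: "\<forall>c>0. \<forall>a. ((\<lambda>x. measure \<sigma> {x + a<..x + a + c} / measure \<sigma> {x<..x + c}) \<longlongrightarrow> 1) at_top"
    and rc: "continuous_on UNIV r" and supp: "\<forall>v. \<bar>v\<bar> > B \<longrightarrow> r v = 0" and B0: "B \<ge> 0"
    and int1: "integral\<^sup>L lborel r = 1" and eps: "\<epsilon> > 0"
  shows "\<exists>h0>0. \<forall>h. 0 < h \<and> h \<le> h0 \<longrightarrow>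
     (\<forall>\<^sub>F x in at_top. \<bar>h * Gf r \<sigma> x - measure \<sigma> {x<..x + h}\<bar> \<le> \<epsilon> * measure \<sigma> {x<..x + h})"
proof -
  obtain Mr where Mr: "Mr \<ge> 0" "\<forall>v. \<bar>r v\<bar> \<le> Mr" using cc_bounded[OF rc supp] by blast
  have rm[measurable]: "r \<in> borel_measurable borel" by (rule borel_measurable_continuous_onI[OF rc])
  have ri: "integrable lborel r"
  proof -
    have "integrable lborel (\<lambda>x. indicator {-B..B} x *\<^sub>R r x)"
      by (rule borel_integrable_compact) (auto intro: continuous_on_subset[OF rc])
    moreover have "(\<lambda>x. indicator {-B..B} x *\<^sub>R r x) = r"
      using supp by (force simp: indicator_def)
    ultimately show ?thesis by simp
  qed
  define C where "C = (2*B+2)*(3+Mr)"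
  have C0: "C > 0" unfolding C_def using B0 Mr by simp
  define e where "e = min 1 (\<epsilon> / C)"
  have e0: "e > 0" "e \<le> 1" using eps C0 unfolding e_def by auto
  have eC: "e * C \<le> \<epsilon>" using C0 unfolding e_def by (simp add: min_def field_simps)
  obtain d where d: "d > 0" "\<forall>v w. \<bar>v - w\<bar> < d \<longrightarrow> \<bar>r v - r w\<bar> < e"
    using cc_unif[OF rc supp e0(1)] by blast
  show ?thesis
  proof (intro exI[of _ "min (d/2) 1"] conjI allI impI)
    show "0 < min (d/2) 1" using d by simp
    fix h assume h: "0 < h \<and> h \<le> min (d/2) 1"
    have h0: "h > 0" using h by simp
    define N where "N = nat \<lceil>2*B/h\<rceil> + 1"
    have t0: "2*B/h \<ge> 0" using B0 h0 by simp
    have RN: "real N = real_of_int \<lceil>2*B/h\<rceil> + 1" unfolding N_def using t0 by simp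
    have "real N \<ge> 2*B/h + 1" using RN by linarith
    then have "real N * h \<ge> (2*B/h + 1) * h" using h0 by (simp add: mult_right_mono)
    moreover have "(2*B/h + 1) * h = 2*B + h" using h0 by (simp add: field_simps)
    ultimately have "real N * h \<ge> 2*B + h" by linarith
    then have NB: "-B + real N * h > B" using h0 by linarith
    have "real N < 2*B/h + 2" using RN by linarith
    then have "real N * h < (2*B/h + 2) * h" using h0 by (simp add: mult_strict_right_mono)
    moreover have "(2*B/h + 2) * h = 2*B + 2*h" using h0 by (simp add: field_simps)
    ultimately have "real N * h < 2*B + 2*h" by linarith
    then have Nh: "real N * h \<le> 2*B + 2" using h by linarith
    have uc: "\<forall>v w. \<bar>v - w\<bar> < h \<longrightarrow> \<bar>r v - r w\<bar> \<le> e"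
      using d h by (metis less_eq_real_def min.boundedE order.strict_trans2 field_sum_of_halves
          add_less_same_cancel1 half_gt_zero_iff not_less)
    have pw: "\<forall>v. \<bar>r v - (\<Sum>i<N. r (-B + real i * h) * indicator {-B + real i * h ..< -B + real i * h + h} v)\<bar>
      \<le> e * (\<Sum>i<N. indicator {-B + real i * h ..< -B + real i * h + h} v)"
      using cell_approx[OF h0 supp uc NB] by blast
    define S where "S = (\<Sum>i<N. r (-B + real i * h))"
    have R: "\<bar>1 - h * S\<bar> \<le> e * real N * h" unfolding S_def by (rule riemann[OF h0 ri int1 pw])
    define a where "a i = B - real i * h - h" for i :: nat
    define mI where "mI i x = measure \<sigma> {x + a i <.. x + a i + h}" for i x
    define mJ where "mJ x = measure \<sigma> {x<..x + h}" for x
    have G: "\<bar>Gf r \<sigma> x - (\<Sum>i<N. r (-B + real i * h) * mI i x)\<bar> \<le> e * (\<Sum>i<N. mI i x)" for x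
      unfolding mI_def a_def by (rule Gstep[OF fs ss rm Mr(2) pw])
    have evJ: "\<forall>\<^sub>F x in at_top. 0 < mJ x" unfolding mJ_def using pos h0 by blast
    have evI: "\<forall>\<^sub>F x in at_top. \<forall>i\<in>{..<N}. \<bar>mI i x - mJ x\<bar> \<le> e * mJ x"
    proof (rule eventually_ball_finite, simp, intro ballI)
      fix i assume "i \<in> {..<N}"
      have "((\<lambda>x. mI i x / mJ x) \<longlongrightarrow> 1) at_top"
        unfolding mI_def mJ_def using shift h0 by blast
      from tendstoD[OF this e0(1)]
      have "\<forall>\<^sub>F x in at_top. dist (mI i x / mJ x) 1 < e" .
      then show "\<forall>\<^sub>F x in at_top. \<bar>mI i x - mJ x\<bar> \<le> e * mJ x"
        using evJ
      proof (eventually_elim)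
        case (elim x)
        have "\<bar>mI i x - mJ x\<bar> = \<bar>mI i x / mJ x - 1\<bar> * mJ x"
          using elim(2) by (simp add: field_simps abs_mult_pos)
        also have "\<dots> \<le> e * mJ x"
          using elim by (intro mult_right_mono) (auto simp: dist_real_def)
        finally show ?case .
      qed
    qed
    show "\<forall>\<^sub>F x in at_top. \<bar>h * Gf r \<sigma> x - measure \<sigma> {x<..x + h}\<bar> \<le> \<epsilon> * measure \<sigma> {x<..x + h}"
      using evI evJ unfolding mJ_def[symmetric]
    proof (eventually_elim)
      case (elim x)
      note I = elim(1) and J = elim(2)
      define T where "T = (\<Sum>i<N. r (-B + real i * h) * mI i x)"
      define U where "U = (\<Sum>i<N. mI i x)"
      define g where "g = Gf r \<sigma> x"
      have h1: "U \<le> real N * (1 + e) * mJ x"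
      proof -
        have "U \<le> (\<Sum>i<N. (1 + e) * mJ x)" unfolding U_def
          using I by (intro sum_mono) (auto simp: algebra_simps abs_le_iff)
        then show ?thesis by simp
      qed
      have h2: "\<bar>T - S * mJ x\<bar> \<le> real N * Mr * e * mJ x"
      proof -
        have "T - S * mJ x = (\<Sum>i<N. r (-B + real i * h) * (mI i x - mJ x))"
          unfolding T_def S_def by (simp add: sum_distrib_right right_diff_distrib sum_subtractf)
        also have "\<bar>\<dots>\<bar> \<le> (\<Sum>i<N. \<bar>r (-B + real i * h) * (mI i x - mJ x)\<bar>)" by (rule sum_abs)
        also have "\<dots> \<le> (\<Sum>i<N. Mr * (e * mJ x))"
          unfolding abs_mult
          using I Mr by (intro sum_mono mult_mono) auto
        finally show ?thesis by simp
      qed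
      have h3: "\<bar>g - S * mJ x\<bar> \<le> e * (real N * (1 + e) * mJ x) + real N * Mr * e * mJ x"
      proof -
        have "\<bar>g - S * mJ x\<bar> \<le> \<bar>g - T\<bar> + \<bar>T - S * mJ x\<bar>" by linarith
        moreover have "\<bar>g - T\<bar> \<le> e * U" using G[of x] unfolding g_def T_def U_def .
        moreover have "e * U \<le> e * (real N * (1 + e) * mJ x)" using h1 e0 by (intro mult_left_mono) auto
        ultimately show ?thesis using h2 by linarith
      qed
      have eq: "h * g - mJ x = h * (g - S * mJ x) - (1 - h * S) * mJ x" by (simp add: algebra_simps)
      have "\<bar>h * g - mJ x\<bar> \<le> \<bar>h * (g - S * mJ x)\<bar> + \<bar>(1 - h * S) * mJ x\<bar>"
        unfolding eq by (rule abs_triangle_ineq4)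
      also have "\<dots> = h * \<bar>g - S * mJ x\<bar> + \<bar>1 - h * S\<bar> * mJ x"
        using h0 J by (simp add: abs_mult)
      also have "\<dots> \<le> h * (e * (real N * (1 + e) * mJ x) + real N * Mr * e * mJ x) + e * real N * h * mJ x"
        using h3 R h0 J by (intro add_mono mult_left_mono mult_right_mono) auto
      also have "\<dots> = e * mJ x * ((real N * h) * (2 + e + Mr))" by (simp add: algebra_simps)
      also have "\<dots> \<le> e * mJ x * ((2*B+2) * (3 + Mr))"
        using e0 J Nh Mr h0 B0 by (intro mult_left_mono mult_mono) auto
      also have "\<dots> = (e * C) * mJ x" unfolding C_def by simp
      also have "\<dots> \<le> \<epsilon> * mJ x" using eC J by (intro mult_right_mono) auto
      finally show ?case unfolding g_def mJ_def .
    qed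
  qed
qed



lemma asymp_from_approx:
  fixes f k :: "real \<Rightarrow> real"
  assumes "\<forall>\<epsilon>>0. \<exists>P. (\<forall>\<^sub>F x in at_top. 0 < P x \<and> \<bar>f x - P x\<bar> \<le> \<epsilon> * P x \<and> \<bar>k x - P x\<bar> \<le> \<epsilon> * P x)"
  shows "asymp_eq f k"
  unfolding asymp_eq_def
proof (rule tendstoI)
  fix e :: real assume e: "e > 0"
  define \<epsilon> where "\<epsilon> = min (1/2) (e/8)"
  have \<epsilon>: "\<epsilon> > 0" "\<epsilon> \<le> 1/2" "\<epsilon> \<le> e/8" using e unfolding \<epsilon>_def by auto
  obtain P where P: "\<forall>\<^sub>F x in at_top. 0 < P x \<and> \<bar>f x - P x\<bar> \<le> \<epsilon> * P x \<and> \<bar>k x - P x\<bar> \<le> \<epsilon> * P x"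
    using assms \<epsilon>(1) by blast
  show "\<forall>\<^sub>F x in at_top. dist (f x / k x) 1 < e"
    using P
  proof eventually_elim
    case (elim x)
    then have p: "P x > 0" and a: "\<bar>f x - P x\<bar> \<le> \<epsilon> * P x" and b: "\<bar>k x - P x\<bar> \<le> \<epsilon> * P x" by auto
    have "\<epsilon> * P x \<le> (1/2) * P x" using \<epsilon> p by (intro mult_right_mono) auto
    then have k: "k x \<ge> P x / 2" using b by (simp add: abs_le_iff)
    have kp: "k x > 0" using k p by linarith
    have "\<bar>f x - k x\<bar> \<le> 2 * \<epsilon> * P x" using a b by (simp add: abs_le_iff)
    also have "\<dots> \<le> (e/4) * P x" using \<epsilon> p by (intro mult_right_mono) auto
    also have "\<dots> < e * (P x / 2)" using e p by simp
    also have "\<dots> \<le> e * k x" using e k by (intro mult_left_mono) auto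
    finally have "\<bar>f x - k x\<bar> < e * k x" .
    then have "\<bar>f x - k x\<bar> / k x < e" using kp by (simp add: pos_divide_less_eq)
    moreover have "\<bar>f x / k x - 1\<bar> = \<bar>f x - k x\<bar> / k x" using kp by (simp add: field_simps)
    ultimately show ?case by (simp add: dist_real_def)
  qed
qed

lemma key':
  fixes r :: "real \<Rightarrow> real" and \<sigma> :: "real measure" and B \<epsilon> :: real
  assumes fs: "finite_measure \<sigma>" and ss: "sets \<sigma> = sets borel"
    and pos: "\<forall>c>0. \<forall>\<^sub>F x in at_top. 0 < measure \<sigma> {x<..x + c}"
    and shift: "\<forall>c>0. \<forall>a. ((\<lambda>x. measure \<sigma> {x + a<..x + a + c} / measure \<sigma> {x<..x + c}) \<longlongrightarrow> 1) at_top"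
    and rc: "continuous_on UNIV r" and supp: "\<forall>v. \<bar>v\<bar> > B \<longrightarrow> r v = 0" and B0: "B \<ge> 0"
    and int1: "integral\<^sup>L lborel r = 1" and eps: "\<epsilon> > 0"
  shows "\<exists>h0>0. \<forall>h. 0 < h \<and> h \<le> h0 \<longrightarrow>
     (\<forall>\<^sub>F x in at_top. 0 < measure \<sigma> {x<..x + h} / h \<and>
        \<bar>Gf r \<sigma> x - measure \<sigma> {x<..x + h} / h\<bar> \<le> \<epsilon> * (measure \<sigma> {x<..x + h} / h))"
proof -
  obtain h0 where h0: "h0 > 0" "\<forall>h. 0 < h \<and> h \<le> h0 \<longrightarrow>
     (\<forall>\<^sub>F x in at_top. \<bar>h * Gf r \<sigma> x - measure \<sigma> {x<..x + h}\<bar> \<le> \<epsilon> * measure \<sigma> {x<..x + h})"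
    using key[OF assms] by blast
  show ?thesis
  proof (intro exI[of _ h0] conjI allI impI)
    fix h assume h: "0 < h \<and> h \<le> h0"
    have ev: "\<forall>\<^sub>F x in at_top. 0 < measure \<sigma> {x<..x + h}" using pos h by blast
    show "\<forall>\<^sub>F x in at_top. 0 < measure \<sigma> {x<..x + h} / h \<and>
        \<bar>Gf r \<sigma> x - measure \<sigma> {x<..x + h} / h\<bar> \<le> \<epsilon> * (measure \<sigma> {x<..x + h} / h)"
      using h0(2)[rule_format, OF h] ev
    proof eventually_elim
      case (elim x)
      have hp: "h > 0" using h by simp
      have "\<bar>Gf r \<sigma> x - measure \<sigma> {x<..x + h} / h\<bar> = \<bar>h * Gf r \<sigma> x - measure \<sigma> {x<..x + h}\<bar> / h"
        using hp by (simp add: field_simps)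
      also have "\<dots> \<le> (\<epsilon> * measure \<sigma> {x<..x + h}) / h" using elim(1) hp by (simp add: divide_right_mono)
      finally show ?case using elim(2) hp by simp
    qed
  qed (use h0 in auto)
qed

lemma Gf_cont:
  fixes r :: "real \<Rightarrow> real"
  assumes rc: "continuous_on UNIV r" and supp: "\<forall>v. \<bar>v\<bar> > B \<longrightarrow> r v = 0"
    and fs: "finite_measure \<sigma>" and ss: "sets \<sigma> = sets borel"
  shows "continuous_on UNIV (Gf r \<sigma>)"
proof (rule uniformly_continuous_imp_continuous, unfold uniformly_continuous_on_def, intro allI impI)
  interpret finite_measure \<sigma> by fact
  fix e :: real assume e: "e > 0"
  obtain Mr where Mr: "\<forall>v. \<bar>r v\<bar> \<le> Mr" using cc_bounded[OF rc supp] by blast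
  have rm: "r \<in> borel_measurable borel" by (rule borel_measurable_continuous_onI[OF rc])
  define \<mu> where "\<mu> = measure \<sigma> (space \<sigma>)"
  have \<mu>0: "\<mu> \<ge> 0" unfolding \<mu>_def by simp
  obtain d where d: "d > 0" "\<forall>v w. \<bar>v - w\<bar> < d \<longrightarrow> \<bar>r v - r w\<bar> < e / (\<mu> + 1)"
    using cc_unif[OF rc supp, of "e / (\<mu> + 1)"] e \<mu>0 by auto
  show "\<exists>d>0. \<forall>x\<in>UNIV. \<forall>x'\<in>UNIV. dist x' x < d \<longrightarrow> dist (Gf r \<sigma> x') (Gf r \<sigma> x) < e"
  proof (intro exI[of _ d] conjI ballI impI)
    fix x x' :: real assume "dist x' x < d"
    then have dd: "\<bar>x' - x\<bar> < d" by (simp add: dist_real_def)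
    have i1: "integrable \<sigma> (\<lambda>u. r (x' - u))" by (rule Gf_integrable[OF rm fs ss Mr])
    have i2: "integrable \<sigma> (\<lambda>u. r (x - u))" by (rule Gf_integrable[OF rm fs ss Mr])
    have bd: "\<bar>r (x' - u) - r (x - u)\<bar> \<le> e / (\<mu> + 1)" for u
    proof -
      have "\<bar>(x' - u) - (x - u)\<bar> < d" using dd by simp
      then show ?thesis using d(2) by (meson less_imp_le)
    qed
    have "\<bar>Gf r \<sigma> x' - Gf r \<sigma> x\<bar> = \<bar>\<integral>u. r (x' - u) - r (x - u) \<partial>\<sigma>\<bar>"
      unfolding Gf_def using i1 i2 by simp
    also have "\<dots> \<le> (\<integral>u. e / (\<mu> + 1) \<partial>\<sigma>)"
      by (rule integral_abs_bound_integral) (use i1 i2 bd in auto)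
    also have "\<dots> = e / (\<mu> + 1) * \<mu>" unfolding \<mu>_def by simp
    also have "\<dots> < e" using e \<mu>0 by (simp add: field_simps)
    finally show "dist (Gf r \<sigma> x') (Gf r \<sigma> x) < e" by (simp add: dist_real_def)
  qed (use d in auto)
qed

lemma conv_prob:
  assumes "prob_space M" "prob_space N" "sets M = sets borel" "sets N = sets borel"
  shows "emeasure (M \<star> N) UNIV = 1"
proof -
  interpret M: prob_space M by fact
  interpret N: prob_space N by fact
  have sN: "space N = UNIV" using sets_eq_imp_space_eq[OF assms(4)] by simp
  have "emeasure (M \<star> N) UNIV = (\<integral>\<^sup>+x. \<integral>\<^sup>+y. indicator UNIV (x + y) \<partial>N \<partial>M)"
    by (rule convolution_emeasure') (use assms M.finite_measure_axioms N.finite_measure_axioms in auto)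
  also have "\<dots> = (\<integral>\<^sup>+x. 1 \<partial>M)" using N.emeasure_space_1 sN by simp
  also have "\<dots> = 1" using M.emeasure_space_1 by simp
  finally show ?thesis .
qed

lemma Lloc2:
  fixes \<sigma> \<sigma>2 :: "real measure"
  assumes pos: "\<forall>c>0. \<forall>\<^sub>F x in at_top. 0 < measure \<sigma> {x<..x + c}"
    and shift: "\<forall>c>0. \<forall>a. ((\<lambda>x. measure \<sigma> {x + a<..x + a + c} / measure \<sigma> {x<..x + c}) \<longlongrightarrow> 1) at_top"
    and S: "\<forall>c>0. asymp_eq (\<lambda>x. measure \<sigma>2 {x<..x + c}) (\<lambda>x. 2 * measure \<sigma> {x<..x + c})"
  shows "\<forall>c>0. \<forall>\<^sub>F x in at_top. 0 < measure \<sigma>2 {x<..x + c}"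
    and "\<forall>c>0. \<forall>a. ((\<lambda>x. measure \<sigma>2 {x + a<..x + a + c} / measure \<sigma>2 {x<..x + c}) \<longlongrightarrow> 1) at_top"
proof -
  have P2: "\<forall>\<^sub>F x in at_top. 0 < measure \<sigma>2 {x<..x + c}" if c: "c > 0" for c
  proof -
    have "((\<lambda>x. measure \<sigma>2 {x<..x + c} / (2 * measure \<sigma> {x<..x + c})) \<longlongrightarrow> 1) at_top"
      using S c unfolding asymp_eq_def by blast
    then have "\<forall>\<^sub>F x in at_top. measure \<sigma>2 {x<..x + c} / (2 * measure \<sigma> {x<..x + c}) > 0"
      by (rule order_tendstoD) simp
    then show ?thesis using pos c
      by (auto elim: eventually_elim2 simp: zero_less_divide_iff)
  qed
  then show "\<forall>c>0. \<forall>\<^sub>F x in at_top. 0 < measure \<sigma>2 {x<..x + c}" by blast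
  show "\<forall>c>0. \<forall>a. ((\<lambda>x. measure \<sigma>2 {x + a<..x + a + c} / measure \<sigma>2 {x<..x + c}) \<longlongrightarrow> 1) at_top"
  proof (intro allI impI)
    fix c a :: real assume c: "c > 0"
    define m where "m x = measure \<sigma> {x<..x + c}" for x
    define m2 where "m2 x = measure \<sigma>2 {x<..x + c}" for x
    have fa: "filterlim (\<lambda>x. x + a) at_top at_top"
      by (rule filterlim_tendsto_add_at_top[OF tendsto_const filterlim_ident, of a, simplified add.commute])
    have t1: "((\<lambda>x. m2 x / (2 * m x)) \<longlongrightarrow> 1) at_top"
      using S c unfolding asymp_eq_def m_def m2_def by blast
    have t1a: "((\<lambda>x. m2 (x + a) / (2 * m (x + a))) \<longlongrightarrow> 1) at_top"
      using filterlim_compose[OF t1 fa] by simp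
    have t2: "((\<lambda>x. m (x + a) / m x) \<longlongrightarrow> 1) at_top"
      using shift c unfolding m_def by (simp add: add.assoc)
    have t3: "((\<lambda>x. 1 / (m2 x / (2 * m x))) \<longlongrightarrow> 1 / 1) at_top"
      by (rule tendsto_divide[OF tendsto_const t1]) simp
    have t: "((\<lambda>x. m2 (x + a) / (2 * m (x + a)) * (m (x + a) / m x) * (1 / (m2 x / (2 * m x)))) \<longlongrightarrow> 1 * 1 * (1/1)) at_top"
      by (intro tendsto_mult t1a t2 t3)
    have e1: "\<forall>\<^sub>F x in at_top. 0 < m x" using pos c unfolding m_def by blast
    have e2: "\<forall>\<^sub>F x in at_top. 0 < m (x + a)" using eventually_compose_filterlim[OF e1 fa] .
    have e3: "\<forall>\<^sub>F x in at_top. 0 < m2 x" using P2 c unfolding m2_def by blast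
    have ev: "\<forall>\<^sub>F x in at_top. m2 (x + a) / (2 * m (x + a)) * (m (x + a) / m x) * (1 / (m2 x / (2 * m x)))
        = m2 (x + a) / m2 x"
      using e1 e2 e3 by eventually_elim (simp add: field_simps)
    have t': "((\<lambda>x. m2 (x + a) / (2 * m (x + a)) * (m (x + a) / m x) * (1 / (m2 x / (2 * m x)))) \<longlongrightarrow> 1) at_top"
      using t by (metis (no_types) div_by_1 mult_1)
    have "((\<lambda>x. m2 (x + a) / m2 x) \<longlongrightarrow> 1) at_top"
      by (rule tendsto_cong[OF ev, THEN iffD1, OF t'])
    then show "((\<lambda>x. measure \<sigma>2 {x + a<..x + a + c} / measure \<sigma>2 {x<..x + c}) \<longlongrightarrow> 1) at_top"
      unfolding m2_def by (simp add: add.assoc)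
  qed
qed



lemma q_neg_zero:
  fixes q1 :: "real \<Rightarrow> real"
  assumes cont: "continuous_on UNIV q1" and nn: "\<forall>x. 0 \<le> q1 x" and qm: "q1 \<in> borel_measurable borel"
    and z: "emeasure (density lborel (\<lambda>x. ennreal (q1 x))) {..<0} = 0"
  shows "\<forall>y<0. q1 y = 0"
proof (intro allI impI, rule ccontr)
  fix y :: real assume y: "y < 0" and ne: "q1 y \<noteq> 0"
  then have qy: "q1 y > 0" using nn by (simp add: order_less_le)
  obtain d where d: "d > 0" "\<forall>x'. dist x' y < d \<longrightarrow> dist (q1 x') (q1 y) < q1 y / 2"
    using cont qy unfolding continuous_on_iff by (metis UNIV_I half_gt_zero)
  have pw: "ennreal (q1 y / 2) * indicator {y - d<..<y} x \<le> ennreal (q1 x) * indicator {..<0} x" for x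
  proof (cases "x \<in> {y - d<..<y}")
    case True
    then have "dist x y < d" by (auto simp: dist_real_def)
    then have "\<bar>q1 x - q1 y\<bar> < q1 y / 2" using d(2) by (simp add: dist_real_def)
    then have "q1 x > q1 y / 2" by linarith
    moreover have "x < 0" using True y by auto
    ultimately show ?thesis using True by (simp add: ennreal_leI)
  qed simp
  have "ennreal (q1 y / 2) * ennreal d = (\<integral>\<^sup>+x. ennreal (q1 y / 2) * indicator {y - d<..<y} x \<partial>lborel)"
    using d by (simp add: nn_integral_cmult_indicator)
  also have "\<dots> \<le> (\<integral>\<^sup>+x. ennreal (q1 x) * indicator {..<0} x \<partial>lborel)"
    by (rule nn_integral_mono) (rule pw)
  also have "\<dots> = 0" using z emeasure_density[of "\<lambda>x. ennreal (q1 x)" lborel "{..<0}"] qm by simp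
  finally have "ennreal (q1 y / 2) * ennreal d = 0" by simp
  then show False using qy d by (simp add: ennreal_mult''[symmetric])
qed



theorem proposition1p1:
  fixes \<rho>1 \<rho>2 :: "real measure" and q1 :: "real \<Rightarrow> real"
  assumes "distr_Rplus \<rho>1"
    and "\<rho>1 = density lborel (\<lambda>x. ennreal (q1 x))"
    and "density_function q1"
    and "continuous_on UNIV q1"
    and "\<exists>K. compact K \<and> (\<forall>x. x \<notin> K \<longrightarrow> q1 x = 0)"
    and "distr_Rplus \<rho>2"
    and "class_S_loc \<rho>2"
  shows "\<rho>1 \<star> \<rho>2 = density lborel (\<lambda>x. ennreal (\<integral>u\<in>{0..x}. q1 (x - u) \<partial>\<rho>2))
     \<and> class_S_d (\<lambda>x. \<integral>u\<in>{0..x}. q1 (x - u) \<partial>\<rho>2)"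
proof -
  note a2 = assms(2) and a4 = assms(4)
  have p1: "prob_space \<rho>1" and s1: "sets \<rho>1 = sets borel" and z1: "emeasure \<rho>1 {..<0} = 0"
    using assms(1) unfolding distr_Rplus_def by auto
  have p2: "prob_space \<rho>2" and s2: "sets \<rho>2 = sets borel" and z2: "emeasure \<rho>2 {..<0} = 0"
    using assms(6) unfolding distr_Rplus_def by auto
  have fin1: "finite_measure \<rho>1" using p1 by (simp add: prob_space_def)
  have fin2: "finite_measure \<rho>2" using p2 by (simp add: prob_space_def)
  have qm[measurable]: "q1 \<in> borel_measurable borel" and qn: "\<forall>x. 0 \<le> q1 x"
    and qi: "(\<integral>\<^sup>+ x. ennreal (q1 x) \<partial>lborel) = 1"
    using assms(3) unfolding density_function_def by auto
  obtain K where K: "compact K" "\<forall>x. x \<notin> K \<longrightarrow> q1 x = 0" using assms(5) by blast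
  obtain B0 where B0: "\<forall>x\<in>K. norm x \<le> B0" using compact_imp_bounded[OF K(1)] bounded_iff by metis
  define B where "B = max B0 0"
  have Bp: "B \<ge> 0" unfolding B_def by simp
  have supp: "\<forall>v. \<bar>v\<bar> > B \<longrightarrow> q1 v = 0"
  proof (intro allI impI)
    fix v :: real assume v: "\<bar>v\<bar> > B"
    show "q1 v = 0"
    proof (cases "v \<in> K")
      case True then have "\<bar>v\<bar> \<le> B0" using B0 by fastforce
      then show ?thesis using v unfolding B_def by simp
    next
      case False then show ?thesis using K(2) by blast
    qed
  qed
  obtain Mq where Mq: "Mq \<ge> 0" "\<forall>v. \<bar>q1 v\<bar> \<le> Mq" using cc_bounded[OF a4 supp] by blast
  have int1: "integral\<^sup>L lborel q1 = 1"
    using integral_eq_nn_integral[of q1 lborel] qm qn qi by simp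
  have neg: "\<forall>y<0. q1 y = 0"
    by (rule q_neg_zero[OF a4 qn qm]) (use z1 a2 in simp)
  have geq: "(\<lambda>x. \<integral>u\<in>{0..x}. q1 (x - u) \<partial>\<rho>2) = Gf q1 \<rho>2"
  proof
    fix x
    have [measurable_cong]: "sets \<rho>2 = sets borel" by (rule s2)
    have ae: "AE u in \<rho>2. u \<ge> 0"
    proof (rule AE_I'[of "{..<0}"])
      show "{..<0} \<in> null_sets \<rho>2" using z2 s2 by (simp add: null_sets_def)
    qed auto
    have "(\<integral>u\<in>{0..x}. q1 (x - u) \<partial>\<rho>2) = (\<integral>u. indicator {0..x} u *\<^sub>R q1 (x - u) \<partial>\<rho>2)"
      by (simp add: set_lebesgue_integral_def)
    also have "\<dots> = (\<integral>u. q1 (x - u) \<partial>\<rho>2)"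
    proof (rule integral_cong_AE)
      show "AE u in \<rho>2. indicator {0..x} u *\<^sub>R q1 (x - u) = q1 (x - u)"
        using ae
      proof eventually_elim
        case (elim u)
        show ?case
        proof (cases "u \<le> x")
          case True then show ?thesis using elim by simp
        next
          case False then show ?thesis using neg by simp
        qed
      qed
    qed measurable
    finally show "(\<integral>u\<in>{0..x}. q1 (x - u) \<partial>\<rho>2) = Gf q1 \<rho>2 x" by (simp add: Gf_def)
  qed
  define g where "g = Gf q1 \<rho>2"
  have fd1: "finite_measure (density lborel (\<lambda>x. ennreal (q1 x)))" using fin1 a2 by simp
  have conv: "\<rho>1 \<star> \<rho>2 = density lborel (\<lambda>x. ennreal (g x))"
    unfolding g_def a2 by (rule conv_density_left[OF qm Mq(2) qn fd1 fin2 s2])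
  have gm[measurable]: "g \<in> borel_measurable borel" unfolding g_def by (rule Gf_measurable[OF qm fin2 s2])
  have gn: "\<forall>x. 0 \<le> g x" unfolding g_def using Gf_bound(1)[OF qm fin2 s2 Mq(2) qn] by blast
  have SD: "\<forall>c>0. class_S_Delta c \<rho>2" using assms(7) unfolding class_S_loc_def by blast
  have pos: "\<forall>c>0. \<forall>\<^sub>F x in at_top. 0 < measure \<rho>2 {x<..x + c}"
    using SD unfolding class_S_Delta_def class_L_Delta_def class_L_def by blast
  have shift: "\<forall>c>0. \<forall>a. ((\<lambda>x. measure \<rho>2 {x + a<..x + a + c} / measure \<rho>2 {x<..x + c}) \<longlongrightarrow> 1) at_top"
    using SD unfolding class_S_Delta_def class_L_Delta_def class_L_def asymp_eq_def by blast
  have S: "\<forall>c>0. asymp_eq (\<lambda>x. measure (\<rho>2 \<star> \<rho>2) {x<..x + c}) (\<lambda>x. 2 * measure \<rho>2 {x<..x + c})"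
    using SD unfolding class_S_Delta_def by blast
  have dens: "density_function g"
    unfolding density_function_def
  proof (intro conjI gm gn)
    have "(\<integral>\<^sup>+ x. ennreal (g x) \<partial>lborel) = emeasure (density lborel (\<lambda>x. ennreal (g x))) UNIV"
      by (simp add: emeasure_density)
    also have "\<dots> = 1" using conv_prob[OF p1 p2 s1 s2] conv by simp
    finally show "(\<integral>\<^sup>+ x. ennreal (g x) \<partial>lborel) = 1" .
  qed
  have evpos: "\<forall>\<^sub>F x in at_top. 0 < g x"
  proof -
    obtain h0 where h0: "h0 > 0" "\<forall>h. 0 < h \<and> h \<le> h0 \<longrightarrow>
     (\<forall>\<^sub>F x in at_top. 0 < measure \<rho>2 {x<..x + h} / h \<and>
        \<bar>Gf q1 \<rho>2 x - measure \<rho>2 {x<..x + h} / h\<bar> \<le> (1/2) * (measure \<rho>2 {x<..x + h} / h))"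
      using key'[OF fin2 s2 pos shift a4 supp Bp int1, of "1/2"] by auto
    from h0(2)[rule_format, of h0] h0(1)
    show ?thesis unfolding g_def
      by (auto elim!: eventually_mono simp: abs_le_iff)
  qed
  have shiftg: "asymp_eq (\<lambda>x. g (x + a)) g" for a
  proof (rule asymp_from_approx, intro allI impI)
    fix \<epsilon> :: real assume eps: "\<epsilon> > 0"
    define ra where "ra v = q1 (v + a)" for v
    have rac: "continuous_on UNIV ra" unfolding ra_def
      by (rule continuous_on_compose2[OF a4]) (auto intro!: continuous_intros)
    have ras: "\<forall>v. \<bar>v\<bar> > B + \<bar>a\<bar> \<longrightarrow> ra v = 0" unfolding ra_def using supp by fastforce
    have raB: "B + \<bar>a\<bar> \<ge> 0" using Bp by simp
    have rai: "integral\<^sup>L lborel ra = 1"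
      using lborel_integral_real_affine[of 1 q1 a] int1 unfolding ra_def by (simp add: add.commute)
    obtain h1 where h1: "h1 > 0" "\<forall>h. 0 < h \<and> h \<le> h1 \<longrightarrow>
     (\<forall>\<^sub>F x in at_top. 0 < measure \<rho>2 {x<..x + h} / h \<and>
        \<bar>Gf ra \<rho>2 x - measure \<rho>2 {x<..x + h} / h\<bar> \<le> \<epsilon> * (measure \<rho>2 {x<..x + h} / h))"
      using key'[OF fin2 s2 pos shift rac ras raB rai eps] by auto
    obtain h2 where h2: "h2 > 0" "\<forall>h. 0 < h \<and> h \<le> h2 \<longrightarrow>
     (\<forall>\<^sub>F x in at_top. 0 < measure \<rho>2 {x<..x + h} / h \<and>
        \<bar>Gf q1 \<rho>2 x - measure \<rho>2 {x<..x + h} / h\<bar> \<le> \<epsilon> * (measure \<rho>2 {x<..x + h} / h))"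
      using key'[OF fin2 s2 pos shift a4 supp Bp int1 eps] by auto
    define h where "h = min h1 h2"
    have hh: "0 < h \<and> h \<le> h1" "0 < h \<and> h \<le> h2" using h1 h2 unfolding h_def by auto
    have ga: "g (x + a) = Gf ra \<rho>2 x" for x
      unfolding g_def Gf_def ra_def by (simp add: algebra_simps)
    show "\<exists>P. \<forall>\<^sub>F x in at_top. 0 < P x \<and> \<bar>g (x + a) - P x\<bar> \<le> \<epsilon> * P x \<and> \<bar>g x - P x\<bar> \<le> \<epsilon> * P x"
      apply (rule exI[of _ "\<lambda>x. measure \<rho>2 {x<..x + h} / h"])
      using h1(2)[rule_format, OF hh(1)] h2(2)[rule_format, OF hh(2)]
      by eventually_elim (auto simp: g_def ga[unfolded g_def])
  qed
  have clL: "class_L g"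
    unfolding class_L_def using gm gn evpos shiftg by blast
  define q2 where "q2 = Gf q1 \<rho>1"
  have q2m[measurable]: "q2 \<in> borel_measurable borel" unfolding q2_def by (rule Gf_measurable[OF qm fin1 s1])
  have q2c: "continuous_on UNIV q2" unfolding q2_def by (rule Gf_cont[OF a4 supp fin1 s1])
  have q2n: "\<forall>x. 0 \<le> q2 x" unfolding q2_def using Gf_bound(1)[OF qm fin1 s1 Mq(2) qn] by blast
  have q2s: "\<forall>v. \<bar>v\<bar> > 2 * B \<longrightarrow> q2 v = 0"
  proof (intro allI impI)
    fix v :: real assume v: "\<bar>v\<bar> > 2 * B"
    have "q2 v = (\<integral>u. q1 (v - u) \<partial>density lborel (\<lambda>x. ennreal (q1 x)))"
      unfolding q2_def Gf_def a2 ..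
    also have "\<dots> = (\<integral>u. q1 u *\<^sub>R q1 (v - u) \<partial>lborel)"
      by (rule integral_density) (use qn in auto)
    also have "\<dots> = (\<integral>u. (0::real) \<partial>(lborel::real measure))"
    proof (rule Bochner_Integration.integral_cong[OF refl])
      fix u :: real assume "u \<in> space lborel"
      show "q1 u *\<^sub>R q1 (v - u) = 0"
      proof (cases "\<bar>u\<bar> > B")
        case True then show ?thesis using supp by simp
      next
        case False then have "\<bar>v - u\<bar> > B" using v by linarith
        then show ?thesis using supp by simp
      qed
    qed
    finally show "q2 v = 0" by simp
  qed
  have conv11: "\<rho>1 \<star> \<rho>1 = density lborel (\<lambda>x. ennreal (q2 x))"
    unfolding q2_def by (subst (1) a2) (rule conv_density_left[OF qm Mq(2) qn fd1 fin1 s1])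
  have q2i: "integral\<^sup>L lborel q2 = 1"
  proof -
    have "(\<integral>\<^sup>+ x. ennreal (q2 x) \<partial>lborel) = emeasure (density lborel (\<lambda>x. ennreal (q2 x))) UNIV"
      by (simp add: emeasure_density)
    also have "\<dots> = 1" using conv_prob[OF p1 p1 s1 s1] conv11 by simp
    finally show ?thesis using integral_eq_nn_integral[of q2 lborel] q2m q2n by simp
  qed
  have B2: "2 * B \<ge> 0" using Bp by simp
  have fin22: "finite_measure (\<rho>2 \<star> \<rho>2)" by (rule convolution_finite[OF fin2 fin2 s2 s2])
  have s22: "sets (\<rho>2 \<star> \<rho>2) = sets borel" by simp
  have fin12: "finite_measure (\<rho>1 \<star> \<rho>2)" by (rule convolution_finite[OF fin1 fin2 s2 s1])
  have s12: "sets (\<rho>1 \<star> \<rho>2) = sets borel" by simp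
  have Mg: "\<forall>v. \<bar>g v\<bar> \<le> Mq * measure \<rho>2 (space \<rho>2)"
    unfolding g_def using Gf_bound(2)[OF qm fin2 s2 Mq(2) qn] by blast
  have fconv_eq: "fconv g g x = Gf q2 (\<rho>2 \<star> \<rho>2) x" for x
  proof -
    have "fconv g g x = (\<integral>u. g u *\<^sub>R g (x - u) \<partial>lborel)"
      unfolding fconv_def by (simp add: mult.commute)
    also have "\<dots> = (\<integral>u. g (x - u) \<partial>density lborel (\<lambda>x. ennreal (g x)))"
      by (rule integral_density[symmetric]) (use gn in auto)
    also have "\<dots> = Gf g (\<rho>1 \<star> \<rho>2) x" unfolding Gf_def conv ..
    also have "\<dots> = Gf q1 ((\<rho>1 \<star> \<rho>2) \<star> \<rho>2) x"
      unfolding g_def by (rule Gf_comp[OF qm Mq(2) qn fin12 fin2 s12 s2])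
    also have "((\<rho>1 \<star> \<rho>2) \<star> \<rho>2) = ((\<rho>2 \<star> \<rho>2) \<star> \<rho>1)"
    proof -
      have "(\<rho>1 \<star> (\<rho>2 \<star> \<rho>2)) = ((\<rho>1 \<star> \<rho>2) \<star> \<rho>2)"
        by (rule convolution_associative) (use fin1 fin2 s1 s2 in auto)
      moreover have "(\<rho>1 \<star> (\<rho>2 \<star> \<rho>2)) = ((\<rho>2 \<star> \<rho>2) \<star> \<rho>1)"
        by (rule convolution_commutative) (use fin1 fin22 s1 in auto)
      ultimately show ?thesis by simp
    qed
    also have "Gf q1 ((\<rho>2 \<star> \<rho>2) \<star> \<rho>1) x = Gf q2 (\<rho>2 \<star> \<rho>2) x"
      unfolding q2_def by (rule Gf_comp[OF qm Mq(2) qn fin22 fin1 s22 s1, symmetric])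
    finally show ?thesis .
  qed
  have pos2: "\<forall>c>0. \<forall>\<^sub>F x in at_top. 0 < measure (\<rho>2 \<star> \<rho>2) {x<..x + c}"
    by (rule Lloc2(1)[OF pos shift S])
  have shift2: "\<forall>c>0. \<forall>a. ((\<lambda>x. measure (\<rho>2 \<star> \<rho>2) {x + a<..x + a + c} / measure (\<rho>2 \<star> \<rho>2) {x<..x + c}) \<longlongrightarrow> 1) at_top"
    by (rule Lloc2(2)[OF pos shift S])
  have subexp: "asymp_eq (fconv g g) (\<lambda>x. 2 * g x)"
  proof (rule asymp_from_approx, intro allI impI)
    fix \<epsilon> :: real assume eps: "\<epsilon> > 0"
    define e where "e = min 1 (\<epsilon> / 3)"
    have e: "e > 0" "e \<le> 1" "3 * e \<le> \<epsilon>" using eps unfolding e_def by auto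
    obtain h1 where h1: "h1 > 0" "\<forall>h. 0 < h \<and> h \<le> h1 \<longrightarrow>
     (\<forall>\<^sub>F x in at_top. 0 < measure (\<rho>2 \<star> \<rho>2) {x<..x + h} / h \<and>
        \<bar>Gf q2 (\<rho>2 \<star> \<rho>2) x - measure (\<rho>2 \<star> \<rho>2) {x<..x + h} / h\<bar> \<le> e * (measure (\<rho>2 \<star> \<rho>2) {x<..x + h} / h))"
      using key'[OF fin22 s22 pos2 shift2 q2c q2s B2 q2i e(1)] by auto
    obtain h2 where h2: "h2 > 0" "\<forall>h. 0 < h \<and> h \<le> h2 \<longrightarrow>
     (\<forall>\<^sub>F x in at_top. 0 < measure \<rho>2 {x<..x + h} / h \<and>
        \<bar>Gf q1 \<rho>2 x - measure \<rho>2 {x<..x + h} / h\<bar> \<le> e * (measure \<rho>2 {x<..x + h} / h))"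
      using key'[OF fin2 s2 pos shift a4 supp Bp int1 e(1)] by auto
    define h where "h = min h1 h2"
    have hh: "0 < h \<and> h \<le> h1" "0 < h \<and> h \<le> h2" using h1 h2 unfolding h_def by auto
    have "((\<lambda>x. measure (\<rho>2 \<star> \<rho>2) {x<..x + h} / (2 * measure \<rho>2 {x<..x + h})) \<longlongrightarrow> 1) at_top"
      using S hh(1) unfolding asymp_eq_def by blast
    from tendstoD[OF this e(1)]
    have ev3: "\<forall>\<^sub>F x in at_top. dist (measure (\<rho>2 \<star> \<rho>2) {x<..x + h} / (2 * measure \<rho>2 {x<..x + h})) 1 < e" .
    show "\<exists>P. \<forall>\<^sub>F x in at_top. 0 < P x \<and> \<bar>fconv g g x - P x\<bar> \<le> \<epsilon> * P x \<and> \<bar>2 * g x - P x\<bar> \<le> \<epsilon> * P x"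
    proof (rule exI[of _ "\<lambda>x. 2 * (measure \<rho>2 {x<..x + h} / h)"])
      show "\<forall>\<^sub>F x in at_top. 0 < 2 * (measure \<rho>2 {x<..x + h} / h) \<and>
          \<bar>fconv g g x - 2 * (measure \<rho>2 {x<..x + h} / h)\<bar> \<le> \<epsilon> * (2 * (measure \<rho>2 {x<..x + h} / h)) \<and>
          \<bar>2 * g x - 2 * (measure \<rho>2 {x<..x + h} / h)\<bar> \<le> \<epsilon> * (2 * (measure \<rho>2 {x<..x + h} / h))"
        using h1(2)[rule_format, OF hh(1)] h2(2)[rule_format, OF hh(2)] ev3
      proof eventually_elim
        case (elim x)
        define A where "A = measure (\<rho>2 \<star> \<rho>2) {x<..x + h} / h"
        define b where "b = measure \<rho>2 {x<..x + h} / h"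
        define F where "F = Gf q2 (\<rho>2 \<star> \<rho>2) x"
        have hp: "h > 0" using hh by simp
        have Ap: "A > 0" and FA: "\<bar>F - A\<bar> \<le> e * A" using elim(1) unfolding A_def F_def by auto
        have bp: "b > 0" and gb: "\<bar>g x - b\<bar> \<le> e * b" using elim(2) unfolding b_def g_def by auto
        have mp: "measure \<rho>2 {x<..x + h} > 0" using bp hp unfolding b_def by (simp add: zero_less_divide_iff)
        have rat: "A / (2 * b) = measure (\<rho>2 \<star> \<rho>2) {x<..x + h} / (2 * measure \<rho>2 {x<..x + h})"
          unfolding A_def b_def using hp by (simp add: field_simps)
        have "\<bar>A / (2 * b) - 1\<bar> < e" using elim(3) unfolding rat[symmetric] by (simp add: dist_real_def)
        then have "\<bar>A - 2 * b\<bar> / (2 * b) < e" using bp by (simp add: field_simps)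
        then have A2b: "\<bar>A - 2 * b\<bar> \<le> e * (2 * b)" using bp by (simp add: pos_divide_less_eq)
        have "e * b \<le> 1 * b" using e bp by (intro mult_right_mono) auto
        then have A4: "A \<le> 4 * b" using A2b by (simp add: abs_le_iff)
        have eA: "e * A \<le> e * (4 * b)" using A4 e by (intro mult_left_mono) auto
        have "\<bar>F - 2 * b\<bar> \<le> \<bar>F - A\<bar> + \<bar>A - 2 * b\<bar>" by linarith
        also have "\<dots> \<le> e * (4 * b) + e * (2 * b)" using FA eA A2b by linarith
        also have "\<dots> = (3 * e) * (2 * b)" by (simp add: algebra_simps)
        also have "\<dots> \<le> \<epsilon> * (2 * b)" using e bp by (intro mult_right_mono) auto
        finally have f1: "\<bar>F - 2 * b\<bar> \<le> \<epsilon> * (2 * b)" .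
        have "\<bar>2 * g x - 2 * b\<bar> = \<bar>2 * (g x - b)\<bar>" by (simp add: right_diff_distrib)
        also have "\<dots> = 2 * \<bar>g x - b\<bar>" by (simp only: abs_mult abs_numeral)
        also have "\<dots> \<le> 2 * (e * b)" using gb by simp
        also have "\<dots> = e * (2 * b)" by simp
        also have "\<dots> \<le> \<epsilon> * (2 * b)" using e bp by (intro mult_right_mono) auto
        finally have f2: "\<bar>2 * g x - 2 * b\<bar> \<le> \<epsilon> * (2 * b)" .
        show ?case using f1 f2 bp unfolding F_def b_def fconv_eq by simp
      qed
    qed
  qed
  have "class_S_d g"
    unfolding class_S_d_def class_L_d_def using dens clL subexp by blast
  moreover have geq': "\<And>x. (\<integral>u\<in>{0..x}. q1 (x - u) \<partial>\<rho>2) = Gf q1 \<rho>2 x"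
    using geq by (simp add: fun_eq_iff)
  ultimately show ?thesis using conv by (simp add: geq' g_def)
qed

end
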